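(* Let $X$ be a separable $F$-space and let $A$ be a densely defined closed linear operator in $X$ such that $A^r$ is a closed operator for every positive integer $r$. Suppose there are a dense subset $X_0\subset D(A^\infty):=\bigcap_{n\ge 0}D(A^n)$ of $X$ and a mapping $B:X_0\to X_0$ such that: (1) $ABx=x$ for all $x\in X_0$; (2) $\sum_{n=1}^\infty A^n x$ converges unconditionally for all $x\in X_0$; (3) $\sum_{n=1}^\infty B^n x$ converges unconditionally for all $x\in X_0$. Then $A$ is frequently hypercyclic.
   Context: An $F$-space is a topological vector space over $\mathbb{K}\in\{\mathbb{R},\mathbb{C}\}$ whose topology is given by a complete translation-invariant metric, equivalently by an $F$-norm $\|\cdot\|$ (satisfying $\|x\|=0\iff x=0$; $\|\lambda x\|\le\|x\|$ for $|\lambda|\le1$; $\lim_{\lambda\to0}\|\lambda x\|=0$; $\|x+y\|\le\|x\|+\|y\|$). A series $\sum_k x_k$ in $X$ converges unconditionally if for every $\varepsilon>0$ there is $N\ge1$ such that $\|\sum_{k\in F}x_k\|<\varepsilon$ for every finite $F\subset\mathbb{N}$ with $F\cap\{1,\dots,N\}=\emptyset$. The domain of $A^n$ is $D(A^n)=\{x: x,Ax,\dots,A^{n-1}x\in D(A)\}$. The lower density of $E\subset\mathbb{N}$ is $\underline{\mathrm{dens}}(E)=\liminf_{N\to\infty}\#(E\cap\{1,\dots,N\})/N$. A (possibly unbounded) densely defined operator $T$ in $X$ is frequently hypercyclic if there is a vector $f\in D(T)$ such that $T^nf\in D(T)$ for every $n\ge1$ and, for every non-empty open $U\subset X$, the set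 $\{n\in\mathbb{N}: T^nf\in U\}$ has positive lower density. *)

theory Defs
  imports "HOL-Analysis.Analysis" "HOL-Library.Liminf_Limsup"
begin

text \<open>The F-space X is the whole (real) vector type 'a, with topology given by an
F-norm Nm; the metric is d(x,y) = Nm (x - y).\<close>

definition F_norm :: "('a::real_vector \<Rightarrow> real) \<Rightarrow> bool" where
  "F_norm Nm \<longleftrightarrow>
     (\<forall>x. Nm x = 0 \<longleftrightarrow> x = 0) \<and>
     (\<forall>x c. \<bar>c\<bar> \<le> 1 \<longrightarrow> Nm (c *\<^sub>R x) \<le> Nm x) \<and>
     (\<forall>x. ((\<lambda>c. Nm (c *\<^sub>R x)) \<longlongrightarrow> 0) (at (0::real))) \<and>
     (\<forall>x y. Nm (x + y) \<le> Nm x + Nm y)"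

definition F_space :: "('a::real_vector \<Rightarrow> real) \<Rightarrow> bool" where
  "F_space Nm \<longleftrightarrow> F_norm Nm \<and>
     (\<forall>s::nat \<Rightarrow> 'a. (\<forall>e>0. \<exists>M. \<forall>m n. M \<le> m \<longrightarrow> M \<le> n \<longrightarrow> Nm (s m - s n) < e)
        \<longrightarrow> (\<exists>x. (\<lambda>n. Nm (s n - x)) \<longlonglongrightarrow> 0))"

definition F_dense :: "('a::real_vector \<Rightarrow> real) \<Rightarrow> 'a set \<Rightarrow> bool" where
  "F_dense Nm S \<longleftrightarrow> (\<forall>x. \<forall>e>0. \<exists>s\<in>S. Nm (x - s) < e)"

definition F_open :: "('a::real_vector \<Rightarrow> real) \<Rightarrow> 'a set \<Rightarrow> bool" where
  "F_open Nm U \<longleftrightarrow> (\<forall>x\<in>U. \<exists>e>0. \<forall>y. Nm (y - x) < e \<longrightarrow> y \<in> U)"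

definition F_separable :: "('a::real_vector \<Rightarrow> real) \<Rightarrow> bool" where
  "F_separable Nm \<longleftrightarrow> (\<exists>S. countable S \<and> F_dense Nm S)"

definition F_tendsto :: "('a::real_vector \<Rightarrow> real) \<Rightarrow> (nat \<Rightarrow> 'a) \<Rightarrow> 'a \<Rightarrow> bool" where
  "F_tendsto Nm s x \<longleftrightarrow> (\<lambda>n. Nm (s n - x)) \<longlonglongrightarrow> 0"

text \<open>A (possibly unbounded) operator is a pair (domain D, map A) where only the values on D matter.\<close>

definition linear_op :: "'a::real_vector set \<Rightarrow> ('a \<Rightarrow> 'a) \<Rightarrow> bool" where
  "linear_op D A \<longleftrightarrow> 0 \<in> D \<and> (\<forall>x\<in>D. \<forall>y\<in>D. x + y \<in> D \<and> A (x + y) = A x + A y) \<and>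
     (\<forall>x\<in>D. \<forall>c. c *\<^sub>R x \<in> D \<and> A (c *\<^sub>R x) = c *\<^sub>R A x)"

definition closed_op :: "('a::real_vector \<Rightarrow> real) \<Rightarrow> 'a set \<Rightarrow> ('a \<Rightarrow> 'a) \<Rightarrow> bool" where
  "closed_op Nm D A \<longleftrightarrow> (\<forall>s x y. (\<forall>n. s n \<in> D) \<longrightarrow> F_tendsto Nm s x \<longrightarrow>
       F_tendsto Nm (\<lambda>n. A (s n)) y \<longrightarrow> x \<in> D \<and> A x = y)"

definition pow_dom :: "'a set \<Rightarrow> ('a \<Rightarrow> 'a) \<Rightarrow> nat \<Rightarrow> 'a set" where
  "pow_dom D A n = {x. \<forall>k<n. (A ^^ k) x \<in> D}"

definition inf_dom :: "'a set \<Rightarrow> ('a \<Rightarrow> 'a) \<Rightarrow> 'a set" where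
  "inf_dom D A = (\<Inter>n. pow_dom D A n)"

definition uncond_conv :: "('a::real_vector \<Rightarrow> real) \<Rightarrow> (nat \<Rightarrow> 'a) \<Rightarrow> bool" where
  "uncond_conv Nm x \<longleftrightarrow> (\<forall>e>0. \<exists>M\<ge>1. \<forall>F. finite F \<longrightarrow> F \<subseteq> {1..} \<longrightarrow>
       F \<inter> {1..M} = {} \<longrightarrow> Nm (\<Sum>k\<in>F. x k) < e)"

definition lower_density :: "nat set \<Rightarrow> ereal" where
  "lower_density E = liminf (\<lambda>N. ereal (real (card (E \<inter> {1..N})) / real N))"

definition freq_hypercyclic :: "('a::real_vector \<Rightarrow> real) \<Rightarrow> 'a set \<Rightarrow> ('a \<Rightarrow> 'a) \<Rightarrow> bool" where
  "freq_hypercyclic Nm D T \<longleftrightarrow> (\<exists>f\<in>D. (\<forall>n\<ge>1. (T ^^ n) f \<in> D) \<and>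
      (\<forall>U. F_open Nm U \<and> U \<noteq> {} \<longrightarrow> lower_density {n. (T ^^ n) f \<in> U} > 0))"

end

theory Submission
  imports Defs
begin

section \<open>F-norm basics\<close>

lemma Fn_zero: assumes "F_norm Nm" shows "Nm 0 = 0"
  using assms unfolding F_norm_def by blast

lemma Fn_tri: assumes "F_norm Nm" shows "Nm (x + y) \<le> Nm x + Nm y"
  using assms unfolding F_norm_def by blast

lemma Fn_neg: assumes "F_norm Nm" shows "Nm (- x) = Nm x"
proof -
  have h0: "\<forall>x c. \<bar>c\<bar> \<le> 1 \<longrightarrow> Nm (c *\<^sub>R x) \<le> Nm x" using assms unfolding F_norm_def by blast
  have h: "\<And>z. Nm ((-1::real) *\<^sub>R z) \<le> Nm z" using h0 by (metis abs_neg_one order_refl)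
  have "Nm (-x) \<le> Nm x" using h[of x] by simp
  moreover have "Nm x \<le> Nm (-x)" using h[of "-x"] by simp
  ultimately show ?thesis by simp
qed

lemma Fn_nonneg: assumes "F_norm Nm" shows "0 \<le> Nm x"
proof -
  have "Nm 0 \<le> Nm x + Nm (-x)" using Fn_tri[OF assms, of x "-x"] by simp
  thus ?thesis using Fn_zero[OF assms] Fn_neg[OF assms] by simp
qed

lemma Fn_sym: assumes "F_norm Nm" shows "Nm (x - y) = Nm (y - x)"
  using Fn_neg[OF assms, of "x - y"] by simp

lemma Fn_tri_diff: assumes "F_norm Nm" shows "Nm (x - z) \<le> Nm (x - y) + Nm (y - z)"
  using Fn_tri[OF assms, of "x - y" "y - z"] by simp

lemma Fn_sum: assumes "F_norm Nm" shows "Nm (sum f F) \<le> (\<Sum>i\<in>F. Nm (f i))"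
proof (induction F rule: infinite_finite_induct)
  case (infinite F) thus ?case using Fn_zero[OF assms] by simp
next
  case empty thus ?case using Fn_zero[OF assms] by simp
next
  case (insert x F)
  thus ?case using Fn_tri[OF assms, of "f x" "sum f F"] by simp
qed

lemma Fs_cauchy:
  assumes "F_space Nm"
    and "\<And>e. e > 0 \<Longrightarrow> \<exists>K0. \<forall>K K'. K0 \<le> K \<longrightarrow> K \<le> K' \<longrightarrow> Nm (s K' - s K) < e"
  shows "\<exists>g. F_tendsto Nm s g"
proof -
  have Fn: "F_norm Nm" using assms(1) unfolding F_space_def by blast
  have "\<exists>M. \<forall>m n. M \<le> m \<longrightarrow> M \<le> n \<longrightarrow> Nm (s m - s n) < e" if ep: "e > 0" for e
  proof -
    obtain K0 where K0: "\<forall>K K'. K0 \<le> K \<longrightarrow> K \<le> K' \<longrightarrow> Nm (s K' - s K) < e"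
      using assms(2)[OF ep] by blast
    have "Nm (s m - s n) < e" if "K0 \<le> m" "K0 \<le> n" for m n
    proof (cases "n \<le> m")
      case True thus ?thesis using K0 that by blast
    next
      case False thus ?thesis using K0 that Fn_sym[OF Fn, of "s m" "s n"] by auto
    qed
    thus ?thesis by blast
  qed
  hence "\<exists>x. (\<lambda>n. Nm (s n - x)) \<longlonglongrightarrow> 0" using assms(1) unfolding F_space_def by blast
  thus ?thesis unfolding F_tendsto_def by blast
qed

lemma Fs_limit_bound:
  assumes Fn: "F_norm Nm" and lim: "F_tendsto Nm s g"
    and ev: "\<And>K. K \<ge> K0 \<Longrightarrow> Nm (s K - c) \<le> b"
  shows "Nm (g - c) \<le> b"
proof (rule field_le_epsilon)
  fix e :: real assume "e > 0"
  from lim have "\<forall>\<^sub>F K in sequentially. dist (Nm (s K - g)) 0 < e"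
    unfolding F_tendsto_def using \<open>e > 0\<close> by (simp add: tendsto_iff)
  then obtain K1 where K1: "\<And>K. K \<ge> K1 \<Longrightarrow> \<bar>Nm (s K - g)\<bar> < e"
    unfolding eventually_sequentially by auto
  define K where "K = max K0 K1"
  have "Nm (g - c) \<le> Nm (g - s K) + Nm (s K - c)" by (rule Fn_tri_diff[OF Fn])
  also have "Nm (g - s K) = Nm (s K - g)" by (rule Fn_sym[OF Fn])
  also have "Nm (s K - g) < e" using K1[of K] unfolding K_def by auto
  also have "Nm (s K - c) \<le> b" using ev[of K] unfolding K_def by auto
  finally show "Nm (g - c) \<le> b + e" by simp
qed

section \<open>Operators\<close>

lemma lin_zero: assumes "linear_op D A" shows "0 \<in> D" "A 0 = 0"
proof -
  show "0 \<in> D" using assms unfolding linear_op_def by blast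
  have "A ((0::real) *\<^sub>R 0) = (0::real) *\<^sub>R A 0" using assms \<open>0 \<in> D\<close> unfolding linear_op_def by blast
  thus "A 0 = 0" by simp
qed

lemma infdom_iff: "x \<in> inf_dom D A \<longleftrightarrow> (\<forall>k. (A ^^ k) x \<in> D)"
  unfolding inf_dom_def pow_dom_def by auto

lemma infdom_add:
  assumes L: "linear_op D A" and x: "x \<in> inf_dom D A" and y: "y \<in> inf_dom D A"
  shows "(A ^^ i) (x + y) = (A ^^ i) x + (A ^^ i) y" "x + y \<in> inf_dom D A"
proof -
  show eq: "(A ^^ i) (x + y) = (A ^^ i) x + (A ^^ i) y" for i
  proof (induction i)
    case 0 thus ?case by simp
  next
    case (Suc i)
    have "(A ^^ i) x \<in> D" "(A ^^ i) y \<in> D" using x y by (auto simp: infdom_iff)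
    thus ?case using Suc L unfolding linear_op_def by simp
  qed
  have "(A ^^ k) (x + y) \<in> D" for k
    using eq[of k] x y L unfolding linear_op_def by (simp add: infdom_iff)
  thus "x + y \<in> inf_dom D A" by (simp add: infdom_iff)
qed

lemma infdom_zero:
  assumes L: "linear_op D A"
  shows "(A ^^ i) 0 = 0" "0 \<in> inf_dom D A"
proof -
  show eq: "(A ^^ i) 0 = 0" for i by (induction i) (auto simp: lin_zero[OF L])
  show "0 \<in> inf_dom D A" using eq lin_zero[OF L] by (simp add: infdom_iff)
qed

lemma infdom_sum:
  assumes L: "linear_op D A" and v: "\<And>n. n \<in> F \<Longrightarrow> v n \<in> inf_dom D A"
  shows "(A ^^ i) (sum v F) = (\<Sum>n\<in>F. (A ^^ i) (v n))" "sum v F \<in> inf_dom D A"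
proof -
  have "(A ^^ i) (sum v F) = (\<Sum>n\<in>F. (A ^^ i) (v n)) \<and> sum v F \<in> inf_dom D A"
    using v
  proof (induction F rule: infinite_finite_induct)
    case (infinite F) thus ?case using infdom_zero[OF L] by simp
  next
    case empty thus ?case using infdom_zero[OF L] by simp
  next
    case (insert x F)
    thus ?case using infdom_add[OF L, of "v x" "sum v F"] by simp
  qed
  thus "(A ^^ i) (sum v F) = (\<Sum>n\<in>F. (A ^^ i) (v n))" "sum v F \<in> inf_dom D A" by auto
qed

lemma infdom_powdom: "inf_dom D A \<subseteq> pow_dom D A r"
  unfolding inf_dom_def by auto

lemma AB_up:
  assumes BX: "\<And>x. x \<in> X0 \<Longrightarrow> B x \<in> X0" and AB: "\<And>x. x \<in> X0 \<Longrightarrow> A (B x) = x"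
    and y: "y \<in> X0"
  shows "(A ^^ m) ((B ^^ (m + n)) y) = (B ^^ n) y"
proof (induction m)
  case 0 thus ?case by simp
next
  case (Suc m)
  have BX': "(B ^^ k) y \<in> X0" for k by (induction k) (auto simp: y BX)
  have e1: "(B ^^ (Suc m + n)) y = B ((B ^^ (m + n)) y)" by simp
  have e2: "(A ^^ Suc m) z = (A ^^ m) (A z)" for z by (simp only: funpow_Suc_right comp_def)
  have "(A ^^ Suc m) ((B ^^ (Suc m + n)) y) = (A ^^ m) (A (B ((B ^^ (m + n)) y)))"
    unfolding e1 e2 ..
  also have "\<dots> = (A ^^ m) ((B ^^ (m + n)) y)" using AB[OF BX'[of "m + n"]] by simp
  finally show ?case using Suc by simp
qed

lemma AB_pow:
  assumes BX: "\<And>x. x \<in> X0 \<Longrightarrow> B x \<in> X0" and AB: "\<And>x. x \<in> X0 \<Longrightarrow> A (B x) = x"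
    and y: "y \<in> X0"
  shows "(A ^^ m) ((B ^^ n) y) = (if m \<le> n then (B ^^ (n - m)) y else (A ^^ (m - n)) y)"
proof (cases "m \<le> n")
  case True
  thus ?thesis using AB_up[OF BX AB y, of m "n - m"] by simp
next
  case False
  have "A ^^ m = A ^^ (m - n) \<circ> A ^^ n" using funpow_add[of "m - n" n A] False by simp
  hence "(A ^^ m) ((B ^^ n) y) = (A ^^ (m - n)) ((A ^^ n) ((B ^^ (n + 0)) y))" by simp
  also have "\<dots> = (A ^^ (m - n)) y" using AB_up[OF BX AB y, of n 0] by simp
  finally show ?thesis using False by simp
qed

section \<open>Core estimate\<close>

lemma core_bound:
  assumes Fn: "F_norm Nm"
    and Cond: "\<And>j k G. j \<le> k \<Longrightarrow> finite G \<Longrightarrow> (\<forall>n\<in>G. N k \<le> n) \<Longrightarrow>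
                 Nm (\<Sum>n\<in>G. (C ^^ n) (y j)) < (1/2)^(k + j)"
    and fF: "finite F" and inj: "inj_on d F"
    and hl: "\<And>l. l \<le> h l"
    and dN: "\<And>n. n \<in> F \<Longrightarrow> N (h (lab n)) \<le> d n"
  shows "Nm (\<Sum>n\<in>F. (C ^^ d n) (y (lab n))) \<le> (\<Sum>l\<in>lab ` F. (1/2::real)^(h l + l))"
proof -
  have "(\<Sum>n\<in>F. (C ^^ d n) (y (lab n))) =
        (\<Sum>l\<in>lab ` F. \<Sum>n\<in>{n. n \<in> F \<and> lab n = l}. (C ^^ d n) (y (lab n)))"
    by (rule sum.image_gen[OF fF])
  also have "\<dots> = (\<Sum>l\<in>lab ` F. \<Sum>i\<in>d ` {n. n \<in> F \<and> lab n = l}. (C ^^ i) (y l))"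
  proof (rule sum.cong[OF refl])
    fix l assume "l \<in> lab ` F"
    have "inj_on d {n. n \<in> F \<and> lab n = l}" using inj by (rule inj_on_subset) auto
    hence "(\<Sum>i\<in>d ` {n. n \<in> F \<and> lab n = l}. (C ^^ i) (y l)) =
           (\<Sum>n\<in>{n. n \<in> F \<and> lab n = l}. (C ^^ d n) (y l))"
      by (simp add: sum.reindex)
    also have "\<dots> = (\<Sum>n\<in>{n. n \<in> F \<and> lab n = l}. (C ^^ d n) (y (lab n)))"
      by (rule sum.cong) auto
    finally show "(\<Sum>n\<in>{n. n \<in> F \<and> lab n = l}. (C ^^ d n) (y (lab n))) =
        (\<Sum>i\<in>d ` {n. n \<in> F \<and> lab n = l}. (C ^^ i) (y l))" by simp
  qed
  finally have eq: "(\<Sum>n\<in>F. (C ^^ d n) (y (lab n))) =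
      (\<Sum>l\<in>lab ` F. \<Sum>i\<in>d ` {n. n \<in> F \<and> lab n = l}. (C ^^ i) (y l))" .
  have "Nm (\<Sum>n\<in>F. (C ^^ d n) (y (lab n))) \<le>
        (\<Sum>l\<in>lab ` F. Nm (\<Sum>i\<in>d ` {n. n \<in> F \<and> lab n = l}. (C ^^ i) (y l)))"
    unfolding eq by (rule Fn_sum[OF Fn])
  also have "\<dots> \<le> (\<Sum>l\<in>lab ` F. (1/2::real)^(h l + l))"
  proof (rule sum_mono)
    fix l assume "l \<in> lab ` F"
    have "\<forall>i\<in>d ` {n. n \<in> F \<and> lab n = l}. N (h l) \<le> i" using dN by auto
    hence "Nm (\<Sum>i\<in>d ` {n. n \<in> F \<and> lab n = l}. (C ^^ i) (y l)) < (1/2)^(h l + l)"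
      using fF by (intro Cond hl) auto
    thus "Nm (\<Sum>i\<in>d ` {n. n \<in> F \<and> lab n = l}. (C ^^ i) (y l)) \<le> (1/2)^(h l + l)" by simp
  qed
  finally show ?thesis .
qed

lemma geom_sum_le2: "finite S \<Longrightarrow> (\<Sum>j\<in>S. (1/2::real)^j) \<le> 2"
proof -
  assume fS: "finite S"
  have "summable (\<lambda>j. (1/2::real)^j)" by (rule summable_geometric) simp
  hence "(\<Sum>j\<in>S. (1/2::real)^j) \<le> (\<Sum>j. (1/2::real)^j)"
    using fS by (intro sum_le_suminf) auto
  also have "\<dots> = 2" using suminf_geometric[of "1/2::real"] by simp
  finally show ?thesis .
qed

lemma max_geom: "finite L \<Longrightarrow> (\<Sum>l\<in>L. (1/2::real)^(max l k + l)) \<le> 2 * (1/2)^k"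
proof -
  assume fL: "finite L"
  have "(\<Sum>l\<in>L. (1/2::real)^(max l k + l)) \<le> (\<Sum>l\<in>L. (1/2)^k * (1/2)^l)"
  proof (rule sum_mono)
    fix l
    have "(1/2::real)^(max l k + l) \<le> (1/2)^(k + l)" by (rule power_decreasing) auto
    thus "(1/2::real)^(max l k + l) \<le> (1/2)^k * (1/2)^l" by (simp add: power_add)
  qed
  also have "\<dots> = (1/2)^k * (\<Sum>l\<in>L. (1/2)^l)" by (simp add: sum_distrib_left)
  also have "\<dots> \<le> (1/2)^k * 2" by (intro mult_left_mono geom_sum_le2 fL) simp
  finally show ?thesis by simp
qed

lemma comb_sets:
  fixes N :: "nat \<Rightarrow> nat" assumes monoN: "mono N" and N1: "\<And>k. N k \<ge> 1"
  obtains E :: "nat \<Rightarrow> nat set" where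
    "\<And>k j. k \<noteq> j \<Longrightarrow> E k \<inter> E j = {}"
    "\<And>k j n m. n \<in> E k \<Longrightarrow> m \<in> E j \<Longrightarrow> n \<noteq> m \<Longrightarrow> n + N k + N j \<le> m \<or> m + N k + N j \<le> n"
    "\<And>k n. n \<in> E k \<Longrightarrow> 2 * N k \<le> n"
    "\<And>k. lower_density (E k) > 0"
proof -
  define P where "P = rec_nat (2^5 * (N 0 + 1)) (\<lambda>j p. p * 2^(Suc j + 5) * (N (Suc j) + 1))"
  have P0: "P 0 = 2^5 * (N 0 + 1)" unfolding P_def by simp
  have PS: "P (Suc j) = P j * 2^(Suc j + 5) * (N (Suc j) + 1)" for j unfolding P_def by simp
  have Ppos0: "P j > 0" for j by (induction j) (auto simp: P0 PS)
  have Ppos: "P j \<ge> 1" for j using Ppos0[of j] by simp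
  have Pbig: "2^(j+5) * (N j + 1) \<le> P j" for j
  proof (cases j)
    case 0 thus ?thesis using P0 by simp
  next
    case (Suc i)
    have "2^(j+5)*(N j+1) \<le> P i * (2^(j+5)*(N j+1))" using Ppos[of i] by simp
    also have "\<dots> = P j" using PS[of i] Suc by (simp add: ac_simps)
    finally show ?thesis .
  qed
  have PN: "4 * N j \<le> P j" for j
  proof -
    have "4 * N j \<le> 2^(j+5) * (N j + 1)"
    proof -
      have "(4::nat) \<le> 2^(j+5)" using power_increasing[of 2 "j+5" "2::nat"] by simp
      thus ?thesis by (intro mult_mono) auto
    qed
    thus ?thesis using Pbig[of j] by linarith
  qed
  have Pj: "j < P j" for j
  proof -
    have "j < 2^j" by (rule less_exp)
    also have "\<dots> \<le> 2^(j+5)" by (rule power_increasing) auto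
    also have "\<dots> \<le> 2^(j+5) * (N j + 1)" by simp
    finally show ?thesis using Pbig[of j] by linarith
  qed
  have Pdvd: "k \<le> j \<Longrightarrow> P k dvd P j" for k j
  proof (induction j)
    case 0 thus ?case by simp
  next
    case (Suc j)
    show ?case
    proof (cases "k = Suc j")
      case True thus ?thesis by simp
    next
      case False
      hence "P k dvd P j" using Suc by simp
      thus ?thesis unfolding PS by simp
    qed
  qed
  have Pmono: "k \<le> j \<Longrightarrow> P k \<le> P j" for k j
    using Pdvd[of k j] Ppos[of j] by (simp add: dvd_imp_le)
  have Pkey: "8 * N j * P k * 2^(j+2) \<le> P j" if "k < j" for k j
  proof -
    obtain i where ji: "j = Suc i" using \<open>k < j\<close> by (cases j) auto
    have "P k \<le> P i" using ji that by (intro Pmono) simp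
    have "8 * N j * P k * 2^(j+2) = P k * (2^(j+2) * 8) * N j" by simp
    also have "\<dots> = P k * 2^(j+5) * N j" by (simp add: power_add)
    also have "\<dots> \<le> P i * 2^(j+5) * (N j + 1)"
      using \<open>P k \<le> P i\<close> by (intro mult_mono) auto
    also have "\<dots> = P j" using PS[of i] ji by simp
    finally show ?thesis .
  qed
  define Bad where "Bad j = {n. \<exists>q\<ge>1. n < q * P j + 2 * N j \<and> q * P j < n + 2 * N j}" for j
  define E where "E k = {n. 0 < n \<and> P k dvd n \<and> (\<forall>j>k. n \<notin> Bad j)}" for k
  have NPsep: "N k + N j \<le> 2 * N j" if "k \<le> j" for k j using monoN that by (auto dest: monoD)
  have mulP: "\<exists>q\<ge>1. n = q * P k" if "n \<in> E k" for n k
  proof -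
    from that obtain q where "n = P k * q" "0 < n" unfolding E_def by auto
    thus ?thesis by (intro exI[of _ q]) (cases q, auto)
  qed
  have notbad: "n + 2 * N j \<le> q * P j \<or> q * P j + 2 * N j \<le> n" if "n \<in> E k" "k < j" "q \<ge> 1" for n k j q
    using that unfolding E_def Bad_def by force
  have sep: "n + N k + N j \<le> m \<or> m + N k + N j \<le> n" if h: "n \<in> E k" "m \<in> E j" "n \<noteq> m" "k < j" for k j n m
  proof -
    obtain q where q: "q \<ge> 1" "m = q * P j" using mulP[OF h(2)] by blast
    have "n + 2 * N j \<le> m \<or> m + 2 * N j \<le> n" using notbad[OF h(1) h(4) q(1)] q by simp
    thus ?thesis using NPsep[of k j] h(4) by auto
  qed
  have disj: "False" if h: "n \<in> E k" "n \<in> E j" "k < j" for n k j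
  proof -
    obtain q where q: "q \<ge> 1" "n = q * P j" using mulP[OF h(2)] by blast
    show False using notbad[OF h(1) h(3) q(1)] q(2) N1[of j] by simp
  qed
  have dens: "lower_density (E k) > 0" for k
  proof -
    define c where "c = 1 / (4 * real (P k))"
    have cpos: "c > 0" using Ppos[of k] unfolding c_def by simp
    have ev: "c \<le> real (card (E k \<inter> {1..M})) / real M" if M: "M \<ge> 4 * P k" for M
    proof -
      define Mk where "Mk = (\<lambda>i. i * P k) ` {1..M div P k}"
      define Bu where "Bu = (\<Union>j\<in>{k<..2*M}. Bad j \<inter> {1..M})"
      have sub: "Mk - Bu \<subseteq> E k \<inter> {1..M}"
      proof
        fix n assume "n \<in> Mk - Bu"
        then obtain i where i: "i \<in> {1..M div P k}" "n = i * P k" "n \<notin> Bu" unfolding Mk_def by auto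
        have "n \<le> M" using i(1,2) using le_trans[OF mult_le_mono1[of i "M div P k" "P k"] div_times_less_eq_dividend[of M "P k"]] by auto
        have "n \<ge> 1" using i Ppos[of k] by simp
        have nb: "n \<notin> Bad j" if "k < j" for j
        proof (cases "j \<le> 2 * M")
          case True thus ?thesis using i(3) that \<open>n \<le> M\<close> \<open>n \<ge> 1\<close> unfolding Bu_def by auto
        next
          case False
          show ?thesis
          proof
            assume "n \<in> Bad j"
            then obtain q where q: "q \<ge> 1" "q * P j < n + 2 * N j" unfolding Bad_def by auto
            have "P j \<le> q * P j" using q(1) by simp
            moreover have "2 * M < P j" using Pj[of j] False by simp
            ultimately show False using q(2) PN[of j] \<open>n \<le> M\<close> by linarith
          qed
        qed
        show "n \<in> E k \<inter> {1..M}" unfolding E_def using nb \<open>n \<le> M\<close> \<open>n \<ge> 1\<close> i(2) by auto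
      qed
      have cardMk: "card Mk = M div P k"
        unfolding Mk_def using Ppos[of k] by (subst card_image) (auto simp: inj_on_def)
      have cardBad: "real (card (Bad j \<inter> {1..M})) \<le> real M / (real (P k) * 2^(j+2))" if kj: "k < j" for j
      proof -
        define Q where "Q = {q. 1 \<le> q \<and> q * P j < 2 * M}"
        have Qsub: "Q \<subseteq> {1..(2*M) div P j}"
          unfolding Q_def using Ppos[of j] by (auto simp: less_eq_div_iff_mult_less_eq)
        hence cQ: "card Q \<le> (2*M) div P j" using card_mono[OF _ Qsub] by simp
        hence cQ2: "card Q * P j \<le> 2 * M"
          by (metis div_mult_mod_eq le_add1 le_trans mult_le_mono1)
        have "Bad j \<inter> {1..M} \<subseteq> (\<Union>q\<in>Q. {q * P j - 2 * N j<..<q * P j + 2 * N j})"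
        proof
          fix n assume n: "n \<in> Bad j \<inter> {1..M}"
          then obtain q where q: "q \<ge> 1" "n < q * P j + 2 * N j" "q * P j < n + 2 * N j"
            unfolding Bad_def by auto
          have "P j \<le> q * P j" using q(1) by simp
          moreover have "n \<le> M" using n by auto
          ultimately have "q * P j < 2 * M" using q(3) PN[of j] by linarith
          hence "q \<in> Q" using q(1) unfolding Q_def by simp
          moreover have "n \<ge> 1" using n by auto
          hence "q * P j - 2 * N j < n" using q(3) by arith
          ultimately show "n \<in> (\<Union>q\<in>Q. {q * P j - 2 * N j<..<q * P j + 2 * N j})" using q(2) by auto
        qed
        hence "card (Bad j \<inter> {1..M}) \<le> card (\<Union>q\<in>Q. {q * P j - 2 * N j<..<q * P j + 2 * N j})"
          by (intro card_mono) (auto intro: finite_subset[OF Qsub])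
        also have "\<dots> \<le> (\<Sum>q\<in>Q. card {q * P j - 2 * N j<..<q * P j + 2 * N j})"
          by (intro card_UN_le finite_subset[OF Qsub]) auto
        also have "\<dots> \<le> (\<Sum>q\<in>Q. 4 * N j)" by (intro sum_mono) auto
        also have "\<dots> = card Q * (4 * N j)" by simp
        finally have cb: "card (Bad j \<inter> {1..M}) \<le> card Q * (4 * N j)" .
        have "card (Bad j \<inter> {1..M}) * (P k * 2^(j+2)) * 2 \<le> card Q * (8 * N j * P k * 2^(j+2))"
          using mult_le_mono1[OF cb, of "P k * 2^(j+2) * 2"] by (simp add: ac_simps)
        also have "\<dots> \<le> card Q * P j" using Pkey[OF kj] by simp
        also have "\<dots> \<le> 2 * M" by (rule cQ2)
        finally have "card (Bad j \<inter> {1..M}) * (P k * 2^(j+2)) \<le> M" by linarith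
        hence "real (card (Bad j \<inter> {1..M}) * (P k * 2^(j+2))) \<le> real M" by (simp only: of_nat_le_iff)
        hence "real (card (Bad j \<inter> {1..M})) * (real (P k) * 2^(j+2)) \<le> real M"
          by (simp only: of_nat_mult of_nat_power of_nat_numeral)
        moreover have "0 < real (P k) * 2^(j+2)" using Ppos0[of k] by simp
        ultimately show ?thesis by (subst pos_le_divide_eq) auto
      qed
      have "real (card Mk) - real (card Bu) \<le> real (card (Mk - Bu))"
        using diff_card_le_card_Diff[of Bu Mk] unfolding Bu_def by auto
      also have "\<dots> \<le> real (card (E k \<inter> {1..M}))" using card_mono[OF _ sub] by simp
      finally have c1: "real (card Mk) - real (card Bu) \<le> real (card (E k \<inter> {1..M}))" .
      have "card Bu \<le> (\<Sum>j\<in>{k<..2*M}. card (Bad j \<inter> {1..M}))"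
        unfolding Bu_def by (rule card_UN_le) simp
      hence "real (card Bu) \<le> real (\<Sum>j\<in>{k<..2*M}. card (Bad j \<inter> {1..M}))"
        by (simp only: of_nat_le_iff)
      also have "\<dots> = (\<Sum>j\<in>{k<..2*M}. real (card (Bad j \<inter> {1..M})))" by (rule of_nat_sum)
      also have "\<dots> \<le> (\<Sum>j\<in>{k<..2*M}. real M / (real (P k) * 2^(j+2)))"
        by (intro sum_mono cardBad) auto
      also have "\<dots> = (real M / (4 * real (P k))) * (\<Sum>j\<in>{k<..2*M}. (1/2)^j)"
        by (simp add: sum_distrib_left power_add field_simps)
      also have "\<dots> \<le> (real M / (4 * real (P k))) * 2"
        by (intro mult_left_mono geom_sum_le2) auto
      finally have c2: "real (card Bu) \<le> real M / (2 * real (P k))" by simp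
      have c3: "real M / real (P k) - 1 \<le> real (card Mk)"
      proof -
        have "M < (M div P k + 1) * P k" using Ppos[of k]
          by (metis div_mult_mod_eq add_mult_distrib mod_less_divisor nat_add_left_cancel_less mult_1 less_le_trans zero_less_one le_refl)
        hence "real M < (real (M div P k) + 1) * real (P k)"
          by (metis of_nat_1 of_nat_add of_nat_less_iff of_nat_mult)
        thus ?thesis unfolding cardMk using Ppos[of k] by (simp add: field_simps)
      qed
      have "real M / (2 * real (P k)) - 1 \<le> real (card (E k \<inter> {1..M}))"
        using c1 c2 c3 by (simp add: field_simps)
      moreover have "real M * c \<le> real M / (2 * real (P k)) - 1"
      proof -
        have "real (4 * P k) \<le> real M" using M by linarith
        thus ?thesis unfolding c_def using Ppos[of k] by (simp add: field_simps)
      qed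
      ultimately have "real M * c \<le> real (card (E k \<inter> {1..M}))" by linarith
      moreover have "real M > 0" using M Ppos[of k] by simp
      ultimately show ?thesis by (simp add: field_simps)
    qed
    have ev': "ereal c \<le> ereal (real (card (E k \<inter> {1..M})) / real M)" if "M \<ge> 4 * P k" for M
      using ev[OF that] by (simp only: ereal_less_eq)
    have "ereal c \<le> lower_density (E k)"
      unfolding lower_density_def
      by (intro Liminf_bounded eventually_sequentiallyI[of "4 * P k"] ev')
    thus ?thesis using cpos by (meson ereal_less(2) less_le_trans zero_ereal_def)
  qed
  show ?thesis
  proof
    fix k j :: nat assume "k \<noteq> j"
    hence "k < j \<or> j < k" by auto
    thus "E k \<inter> E j = {}" using disj by blast
  next
    fix k j n m :: nat assume nm: "n \<in> E k" "m \<in> E j" "n \<noteq> m"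
    consider "k < j" | "j < k" | "k = j" by linarith
    thus "n + N k + N j \<le> m \<or> m + N k + N j \<le> n"
    proof cases
      case 1 thus ?thesis using sep[OF nm] by simp
    next
      case 2 thus ?thesis using sep[OF nm(2) nm(1)] nm(3) by auto
    next
      case 3
      obtain a where a: "a \<ge> 1" "n = a * P k" using mulP[OF nm(1)] by blast
      obtain b where b: "b \<ge> 1" "m = b * P k" using mulP[OF nm(2)] 3 by blast
      have "a \<noteq> b" using a b nm(3) by auto
      hence "a + 1 \<le> b \<or> b + 1 \<le> a" by auto
      hence "n + P k \<le> m \<or> m + P k \<le> n" using a(2) b(2)
        by (metis add_mult_distrib mult_1 mult_le_mono1)
      thus ?thesis using PN[of k] 3 by auto
    qed
  next
    fix k n assume "n \<in> E k"
    then obtain q where "q \<ge> 1" "n = q * P k" using mulP by blast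
    hence "P k \<le> n" by simp
    thus "2 * N k \<le> n" using PN[of k] by simp
  next
    fix k show "lower_density (E k) > 0" by (rule dens)
  qed
qed
theorem theorem2p1:
  fixes Nm :: "'a::real_vector \<Rightarrow> real"
    and D :: "'a set" and A :: "'a \<Rightarrow> 'a"
    and X0 :: "'a set" and B :: "'a \<Rightarrow> 'a"
  assumes "F_space Nm" and "F_separable Nm"
    and "linear_op D A" and "F_dense Nm D" and "closed_op Nm D A"
    and "\<And>r. r \<ge> 1 \<Longrightarrow> closed_op Nm (pow_dom D A r) (A ^^ r)"
    and "X0 \<subseteq> inf_dom D A" and "F_dense Nm X0"
    and "\<And>x. x \<in> X0 \<Longrightarrow> B x \<in> X0"
    and "\<And>x. x \<in> X0 \<Longrightarrow> A (B x) = x"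
    and "\<And>x. x \<in> X0 \<Longrightarrow> uncond_conv Nm (\<lambda>n. (A ^^ n) x)"
    and "\<And>x. x \<in> X0 \<Longrightarrow> uncond_conv Nm (\<lambda>n. (B ^^ n) x)"
  shows "freq_hypercyclic Nm D A"
proof -
  note Fs = assms(1)
  have Fn: "F_norm Nm" using Fs unfolding F_space_def by blast
  note L = assms(3)
  obtain S where S: "countable S" "F_dense Nm S" using assms(2) unfolding F_separable_def by blast
  have Sne: "S \<noteq> {}" using S(2) unfolding F_dense_def by (metis empty_iff zero_less_one)
  define sp where "sp a = from_nat_into S a" for a
  define y where "y k = (SOME z. z \<in> X0 \<and> Nm (sp (fst (prod_decode k)) - z) < 1 / (real (snd (prod_decode k)) + 1))" for k
  have y: "y k \<in> X0 \<and> Nm (sp (fst (prod_decode k)) - y k) < 1 / (real (snd (prod_decode k)) + 1)" for k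
  proof -
    have pos: "1 / (real (snd (prod_decode k)) + 1) > 0" by simp
    have "\<exists>z. z \<in> X0 \<and> Nm (sp (fst (prod_decode k)) - z) < 1 / (real (snd (prod_decode k)) + 1)"
      using assms(8) pos unfolding F_dense_def by blast
    thus ?thesis unfolding y_def by (rule someI_ex)
  qed
  have yX: "y k \<in> X0" for k using y by blast
  have exA: "\<exists>M. M \<ge> 1 \<and> (\<forall>F. finite F \<longrightarrow> F \<subseteq> {1..} \<longrightarrow> F \<inter> {1..M} = {} \<longrightarrow>
        Nm (\<Sum>n\<in>F. (A ^^ n) (y j)) < (1/2)^(k + j))" for j k
  proof -
    have "(1/2::real)^(k + j) > 0" by simp
    thus ?thesis using assms(11)[OF yX[of j]] unfolding uncond_conv_def by blast
  qed
  have exB: "\<exists>M. M \<ge> 1 \<and> (\<forall>F. finite F \<longrightarrow> F \<subseteq> {1..} \<longrightarrow> F \<inter> {1..M} = {} \<longrightarrow>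
        Nm (\<Sum>n\<in>F. (B ^^ n) (y j)) < (1/2)^(k + j))" for j k
  proof -
    have "(1/2::real)^(k + j) > 0" by simp
    thus ?thesis using assms(12)[OF yX[of j]] unfolding uncond_conv_def by blast
  qed
  define MA where "MA j k = (SOME M. M \<ge> 1 \<and> (\<forall>F. finite F \<longrightarrow> F \<subseteq> {1..} \<longrightarrow> F \<inter> {1..M} = {} \<longrightarrow>
        Nm (\<Sum>n\<in>F. (A ^^ n) (y j)) < (1/2)^(k + j)))" for j k
  define MB where "MB j k = (SOME M. M \<ge> 1 \<and> (\<forall>F. finite F \<longrightarrow> F \<subseteq> {1..} \<longrightarrow> F \<inter> {1..M} = {} \<longrightarrow>
        Nm (\<Sum>n\<in>F. (B ^^ n) (y j)) < (1/2)^(k + j)))" for j k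
  have MA: "\<forall>F. finite F \<longrightarrow> F \<subseteq> {1..} \<longrightarrow> F \<inter> {1..MA j k} = {} \<longrightarrow>
        Nm (\<Sum>n\<in>F. (A ^^ n) (y j)) < (1/2)^(k + j)" for j k
    using someI_ex[OF exA[of j k]] unfolding MA_def by blast
  have MB: "\<forall>F. finite F \<longrightarrow> F \<subseteq> {1..} \<longrightarrow> F \<inter> {1..MB j k} = {} \<longrightarrow>
        Nm (\<Sum>n\<in>F. (B ^^ n) (y j)) < (1/2)^(k + j)" for j k
    using someI_ex[OF exB[of j k]] unfolding MB_def by blast
  define N where "N k = (\<Sum>i\<le>k. 1 + (\<Sum>j\<le>i. MA j i + MB j i))" for k
  have Nmono: "mono N"
  proof (rule monoI)
    fix a b :: nat assume "a \<le> b"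
    thus "N a \<le> N b" unfolding N_def by (intro sum_mono2) auto
  qed
  have Nge: "k + 1 \<le> N k" for k
  proof -
    have "(\<Sum>i\<le>k. (1::nat)) \<le> N k" unfolding N_def by (intro sum_mono) auto
    thus ?thesis by simp
  qed
  have NM: "MA j k < N k \<and> MB j k < N k" if "j \<le> k" for j k
  proof -
    have "MA j k + MB j k \<le> (\<Sum>j\<le>k. MA j k + MB j k)"
      using that by (intro member_le_sum) auto
    also have "\<dots> < 1 + (\<Sum>j\<le>k. MA j k + MB j k)" by simp
    also have "\<dots> \<le> N k" unfolding N_def
      by (rule member_le_sum[where f = "\<lambda>i. 1 + (\<Sum>j\<le>i. MA j i + MB j i)"]) auto
    finally show ?thesis by simp
  qed
  have CondA: "Nm (\<Sum>n\<in>G. (A ^^ n) (y j)) < (1/2)^(k + j)"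
    if "j \<le> k" "finite G" "\<forall>n\<in>G. N k \<le> n" for j k G
  proof -
    have "G \<subseteq> {1..}" using that(3) Nge[of k] by fastforce
    moreover have "G \<inter> {1..MA j k} = {}" using that(3) NM[OF that(1)] by fastforce
    ultimately show ?thesis using MA[of j k] that(2) by blast
  qed
  have CondB: "Nm (\<Sum>n\<in>G. (B ^^ n) (y j)) < (1/2)^(k + j)"
    if "j \<le> k" "finite G" "\<forall>n\<in>G. N k \<le> n" for j k G
  proof -
    have "G \<subseteq> {1..}" using that(3) Nge[of k] by fastforce
    moreover have "G \<inter> {1..MB j k} = {}" using that(3) NM[OF that(1)] by fastforce
    ultimately show ?thesis using MB[of j k] that(2) by blast
  qed
  have N1: "N k \<ge> 1" for k using Nge[of k] by simp
  obtain E where Edisj: "\<And>k j. k \<noteq> j \<Longrightarrow> E k \<inter> E j = {}"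
    and Esep: "\<And>k j n m. n \<in> E k \<Longrightarrow> m \<in> E j \<Longrightarrow> n \<noteq> m \<Longrightarrow> n + N k + N j \<le> m \<or> m + N k + N j \<le> n"
    and Ebig: "\<And>k n. n \<in> E k \<Longrightarrow> 2 * N k \<le> n"
    and Edens: "\<And>k. lower_density (E k) > 0"
    using comb_sets[OF Nmono N1] by metis
  define lab where "lab n = (SOME l. n \<in> E l)" for n
  have labE: "lab n = l" if "n \<in> E l" for n l
  proof -
    have "n \<in> E (lab n)" unfolding lab_def using that by (rule someI)
    thus ?thesis using Edisj[of "lab n" l] that by blast
  qed
  define U where "U = (\<Union>l. E l)"
  define x where "x n = (if n \<in> U then (B ^^ n) (y (lab n)) else 0)" for n
  have BX': "(B ^^ n) z \<in> X0" if "z \<in> X0" for n z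
    using that by (induction n) (auto simp: assms(9))
  have xV: "x n \<in> inf_dom D A" for n
    unfolding x_def using BX'[OF yX] assms(7) infdom_zero[OF L] by auto
  define T where "T m K = (\<Sum>n<K. (A ^^ m) (x n))" for m K
  have TS: "(A ^^ m) (\<Sum>n<K. x n) = T m K" for m K
    unfolding T_def by (rule infdom_sum(1)[OF L xV])
  have Ax: "(A ^^ m) (x n) = (if m \<le> n then (B ^^ (n - m)) (y (lab n)) else (A ^^ (m - n)) (y (lab n)))"
    if "n \<in> U" for m n
    using that AB_pow[OF assms(9) assms(10) yX] unfolding x_def by simp
  have AxU: "(A ^^ m) (x n) = 0" if "n \<notin> U" for m n
    using that infdom_zero(1)[OF L] unfolding x_def by simp
  have conv: "\<exists>g. F_tendsto Nm (T m) g" for m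
  proof (rule Fs_cauchy[OF Fs])
    fix e :: real assume "e > 0"
    obtain L0 where L0: "(1/2::real)^L0 < e/2" using real_arch_pow_inv[of "e/2" "1/2::real"] \<open>e > 0\<close> by auto
    define LL where "LL = max L0 m"
    have "(1/2::real)^LL \<le> (1/2)^L0" unfolding LL_def by (rule power_decreasing) auto
    hence LL: "(1/2::real)^LL < e/2" using L0 by linarith
    show "\<exists>K0. \<forall>K K'. K0 \<le> K \<longrightarrow> K \<le> K' \<longrightarrow> Nm (T m K' - T m K) < e"
    proof (intro exI[of _ "N LL + m"] allI impI)
      fix K K' assume K: "N LL + m \<le> K" "K \<le> K'"
      have "T m K' - T m K = (\<Sum>n\<in>{K..<K'}. (A ^^ m) (x n))"
        unfolding T_def using sum_diff_nat_ivl[of 0 K K' "\<lambda>n. (A ^^ m) (x n)"] K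
        by (simp add: lessThan_atLeast0)
      also have "\<dots> = (\<Sum>n\<in>{K..<K'}. if n \<in> U then (B ^^ (n - m)) (y (lab n)) else 0)"
      proof (rule sum.cong[OF refl])
        fix n assume "n \<in> {K..<K'}"
        hence "m \<le> n" using K by auto
        thus "(A ^^ m) (x n) = (if n \<in> U then (B ^^ (n - m)) (y (lab n)) else 0)"
          using Ax[of n m] AxU[of n m] by auto
      qed
      also have "\<dots> = (\<Sum>n\<in>{K..<K'} \<inter> U. (B ^^ (n - m)) (y (lab n)))"
        by (rule sum.inter_restrict[symmetric]) simp
      finally have eq: "T m K' - T m K = (\<Sum>n\<in>{K..<K'} \<inter> U. (B ^^ (n - m)) (y (lab n)))" .
      have "Nm (\<Sum>n\<in>{K..<K'} \<inter> U. (B ^^ (n - m)) (y (lab n))) \<le>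
            (\<Sum>l\<in>lab ` ({K..<K'} \<inter> U). (1/2::real)^(max l LL + l))"
      proof (rule core_bound[OF Fn CondB])
        show "finite ({K..<K'} \<inter> U)" by simp
        show "inj_on (\<lambda>n. n - m) ({K..<K'} \<inter> U)" using K by (auto simp: inj_on_def)
        show "\<And>l. l \<le> max l LL" by simp
        fix n assume n: "n \<in> {K..<K'} \<inter> U"
        then obtain l where l: "n \<in> E l" unfolding U_def by auto
        have ln: "lab n = l" by (rule labE[OF l])
        show "N (max (lab n) LL) \<le> n - m"
        proof (cases "l \<le> LL")
          case True
          have "N (max (lab n) LL) = N LL" using ln True by (simp add: max_def)
          moreover have "K \<le> n" using n by auto
          ultimately show ?thesis using K by linarith
        next
          case False
          have "2 * N l \<le> n" by (rule Ebig[OF l])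
          moreover have "l + 1 \<le> N l" by (rule Nge)
          moreover have "m \<le> LL" unfolding LL_def by simp
          ultimately show ?thesis using ln False by (simp add: max_def)
        qed
      qed simp_all
      also have "\<dots> \<le> 2 * (1/2)^LL" by (rule max_geom) simp
      also have "\<dots> < e" using LL by simp
      finally show "Nm (T m K' - T m K) < e" using eq by simp
    qed
  qed
  obtain g where g: "\<And>m. F_tendsto Nm (T m) (g m)" using conv by metis
  define f where "f = g 0"
  have T0: "T 0 K = (\<Sum>n<K. x n)" for K unfolding T_def by simp
  have clos: "f \<in> pow_dom D A m \<and> (A ^^ m) f = g m" if "m \<ge> 1" for m
  proof -
    have c: "closed_op Nm (pow_dom D A m) (A ^^ m)" by (rule assms(6)[OF that])
    have "(\<Sum>n<K. x n) \<in> inf_dom D A" for K by (rule infdom_sum(2)[OF L]) (rule xV)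
    hence h1: "\<forall>K. (\<Sum>n<K. x n) \<in> pow_dom D A m" using infdom_powdom[of D A m] by blast
    have h2: "F_tendsto Nm (\<lambda>K. \<Sum>n<K. x n) f" using g[of 0] unfolding f_def T0 by simp
    have h3: "F_tendsto Nm (\<lambda>K. (A ^^ m) (\<Sum>n<K. x n)) (g m)" unfolding TS using g[of m] by simp
    show ?thesis using c[unfolded closed_op_def, rule_format, of "\<lambda>K. \<Sum>n<K. x n" f "g m"] h1 h2 h3 by blast
  qed
  have fD: "f \<in> D" using clos[of 1] unfolding pow_dom_def by auto
  have fDn: "(A ^^ n) f \<in> D" if "n \<ge> 1" for n using clos[of "n + 1"] unfolding pow_dom_def by auto
  have approx: "Nm (g m - y k) \<le> 4 * (1/2)^k" if mk: "m \<in> E k" for m k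
  proof (rule Fs_limit_bound[OF Fn g])
    fix K assume K: "K \<ge> m + 1"
    have mU: "m \<in> U" using mk unfolding U_def by auto
    have labm: "lab m = k" by (rule labE[OF mk])
    have dec: "{..<K} = {..<m} \<union> ({m} \<union> {m<..<K})" using K by auto
    have "T m K = (\<Sum>n<m. (A ^^ m) (x n)) + ((A ^^ m) (x m) + (\<Sum>n\<in>{m<..<K}. (A ^^ m) (x n)))"
    proof -
      have "T m K = (\<Sum>n<m. (A ^^ m) (x n)) + (\<Sum>n\<in>{m} \<union> {m<..<K}. (A ^^ m) (x n))"
        unfolding T_def dec by (rule sum.union_disjoint) auto
      also have "(\<Sum>n\<in>{m} \<union> {m<..<K}. (A ^^ m) (x n)) = (A ^^ m) (x m) + (\<Sum>n\<in>{m<..<K}. (A ^^ m) (x n))"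
        by simp
      finally show ?thesis .
    qed
    moreover have "(A ^^ m) (x m) = y k" using Ax[OF mU, of m] labm by simp
    moreover have P1: "(\<Sum>n<m. (A ^^ m) (x n)) = (\<Sum>n\<in>{..<m} \<inter> U. (A ^^ (m - n)) (y (lab n)))"
    proof -
      have "(\<Sum>n<m. (A ^^ m) (x n)) = (\<Sum>n\<in>{..<m}. if n \<in> U then (A ^^ (m - n)) (y (lab n)) else 0)"
        by (rule sum.cong[OF refl]) (use Ax AxU in auto)
      also have "\<dots> = (\<Sum>n\<in>{..<m} \<inter> U. (A ^^ (m - n)) (y (lab n)))"
        by (rule sum.inter_restrict[symmetric]) simp
      finally show ?thesis .
    qed
    moreover have P2: "(\<Sum>n\<in>{m<..<K}. (A ^^ m) (x n)) = (\<Sum>n\<in>{m<..<K} \<inter> U. (B ^^ (n - m)) (y (lab n)))"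
    proof -
      have "(\<Sum>n\<in>{m<..<K}. (A ^^ m) (x n)) = (\<Sum>n\<in>{m<..<K}. if n \<in> U then (B ^^ (n - m)) (y (lab n)) else 0)"
        by (rule sum.cong[OF refl]) (use Ax AxU in auto)
      also have "\<dots> = (\<Sum>n\<in>{m<..<K} \<inter> U. (B ^^ (n - m)) (y (lab n)))"
        by (rule sum.inter_restrict[symmetric]) simp
      finally show ?thesis .
    qed
    ultimately have eq: "T m K - y k = (\<Sum>n\<in>{..<m} \<inter> U. (A ^^ (m - n)) (y (lab n))) +
                                  (\<Sum>n\<in>{m<..<K} \<inter> U. (B ^^ (n - m)) (y (lab n)))" by simp
    have sepd: "N (max (lab n) k) \<le> (if n < m then m - n else n - m)" if n: "n \<in> U" "n \<noteq> m" for n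
    proof -
      obtain l where l: "n \<in> E l" using n unfolding U_def by auto
      have ln: "lab n = l" by (rule labE[OF l])
      have "n + N l + N k \<le> m \<or> m + N l + N k \<le> n" by (rule Esep[OF l mk n(2)])
      moreover have "N (max l k) \<le> N l + N k" by (simp add: max_def)
      ultimately show ?thesis using ln by auto
    qed
    have b1: "Nm (\<Sum>n\<in>{..<m} \<inter> U. (A ^^ (m - n)) (y (lab n))) \<le> 2 * (1/2)^k"
    proof -
      have "Nm (\<Sum>n\<in>{..<m} \<inter> U. (A ^^ (m - n)) (y (lab n))) \<le>
            (\<Sum>l\<in>lab ` ({..<m} \<inter> U). (1/2::real)^(max l k + l))"
      proof (rule core_bound[OF Fn CondA])
        show "finite ({..<m} \<inter> U)" by simp
        show "inj_on (\<lambda>n. m - n) ({..<m} \<inter> U)" by (auto simp: inj_on_def)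
        show "\<And>l. l \<le> max l k" by simp
        fix n assume n: "n \<in> {..<m} \<inter> U"
        thus "N (max (lab n) k) \<le> m - n" using sepd[of n] by auto
      qed simp_all
      also have "\<dots> \<le> 2 * (1/2)^k" by (rule max_geom) simp
      finally show ?thesis .
    qed
    have b2: "Nm (\<Sum>n\<in>{m<..<K} \<inter> U. (B ^^ (n - m)) (y (lab n))) \<le> 2 * (1/2)^k"
    proof -
      have "Nm (\<Sum>n\<in>{m<..<K} \<inter> U. (B ^^ (n - m)) (y (lab n))) \<le>
            (\<Sum>l\<in>lab ` ({m<..<K} \<inter> U). (1/2::real)^(max l k + l))"
      proof (rule core_bound[OF Fn CondB])
        show "finite ({m<..<K} \<inter> U)" by simp
        show "inj_on (\<lambda>n. n - m) ({m<..<K} \<inter> U)" by (auto simp: inj_on_def)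
        show "\<And>l. l \<le> max l k" by simp
        fix n assume n: "n \<in> {m<..<K} \<inter> U"
        thus "N (max (lab n) k) \<le> n - m" using sepd[of n] by auto
      qed simp_all
      also have "\<dots> \<le> 2 * (1/2)^k" by (rule max_geom) simp
      finally show ?thesis .
    qed
    show "Nm (T m K - y k) \<le> 4 * (1/2)^k"
      unfolding eq using Fn_tri[OF Fn] b1 b2 by (smt (verit))
  qed
  show ?thesis
    unfolding freq_hypercyclic_def
  proof (intro bexI[of _ f] conjI allI impI)
    show "f \<in> D" by (rule fD)
    show "\<And>n. 1 \<le> n \<Longrightarrow> (A ^^ n) f \<in> D" by (rule fDn)
    fix W assume W: "F_open Nm W \<and> W \<noteq> {}"
    then obtain x0 where x0: "x0 \<in> W" by blast
    then obtain e where e: "e > 0" "\<And>z. Nm (z - x0) < e \<Longrightarrow> z \<in> W"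
      using W unfolding F_open_def by blast
    obtain s where s: "s \<in> S" "Nm (x0 - s) < e/4" using S(2) e(1) unfolding F_dense_def
      by (metis divide_pos_pos zero_less_numeral)
    obtain a where a: "sp a = s" using from_nat_into_surj[OF S(1) s(1)] unfolding sp_def by blast
    obtain i1 where i1: "i1 > 0" "inverse (real i1) < e/4" using ex_inverse_of_nat_less[of "e/4"] e(1) by auto
    obtain i2 where i2: "(1/2::real)^i2 < e/16" using real_arch_pow_inv[of "e/16" "1/2::real"] e(1) by auto
    define i where "i = max i1 i2"
    define k where "k = prod_encode (a, i)"
    have ki: "i \<le> k" unfolding k_def by (rule le_prod_encode_2)
    have dk: "prod_decode k = (a, i)" unfolding k_def by simp
    have ys: "Nm (s - y k) < e/4"
    proof -
      have "Nm (s - y k) < 1 / (real i + 1)" using y[of k] a dk by simp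
      also have "\<dots> \<le> inverse (real i1)" using i1(1) unfolding i_def
        by (simp add: field_simps inverse_eq_divide)
      finally show ?thesis using i1(2) by simp
    qed
    have pk: "(1/2::real)^k < e/16"
    proof -
      have ik2: "i2 \<le> k" using ki unfolding i_def by simp
      have "(1/2::real)^k \<le> (1/2)^i2" by (rule power_decreasing[OF ik2]) auto
      thus ?thesis using i2 by linarith
    qed
    have sub: "E k \<subseteq> {n. (A ^^ n) f \<in> W}"
    proof
      fix m assume mk: "m \<in> E k"
      have "2 * N k \<le> m" by (rule Ebig[OF mk])
      hence "m \<ge> 1" using N1[of k] by simp
      hence fm: "(A ^^ m) f = g m" using clos by blast
      have t1: "Nm (g m - x0) \<le> Nm (g m - y k) + Nm (y k - x0)" by (rule Fn_tri_diff[OF Fn])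
      have t2: "Nm (y k - x0) \<le> Nm (y k - s) + Nm (s - x0)" by (rule Fn_tri_diff[OF Fn])
      have t3: "Nm (y k - s) = Nm (s - y k)" by (rule Fn_sym[OF Fn])
      have t4: "Nm (s - x0) = Nm (x0 - s)" by (rule Fn_sym[OF Fn])
      have "Nm (g m - x0) < e" using t1 t2 t3 t4 approx[OF mk] ys s(2) pk e(1) by argo
      thus "m \<in> {n. (A ^^ n) f \<in> W}" using e(2) fm by simp
    qed
    have "lower_density (E k) \<le> lower_density {n. (A ^^ n) f \<in> W}"
      unfolding lower_density_def
    proof (rule Liminf_mono, rule always_eventually, rule allI)
      fix M :: nat
      have "card (E k \<inter> {1..M}) \<le> card ({n. (A ^^ n) f \<in> W} \<inter> {1..M})"
        using sub by (intro card_mono) auto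
      hence "real (card (E k \<inter> {1..M})) / real M \<le> real (card ({n. (A ^^ n) f \<in> W} \<inter> {1..M})) / real M"
        by (intro divide_right_mono) auto
      thus "ereal (real (card (E k \<inter> {1..M})) / real M) \<le> ereal (real (card ({n. (A ^^ n) f \<in> W} \<inter> {1..M})) / real M)"
        by simp
    qed
    thus "lower_density {n. (A ^^ n) f \<in> W} > 0" using Edens[of k] by simp
  qed
qed

end
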